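(* Let $\eta_1,\eta_2,\dots$ be i.i.d. random variables with common distribution $G$ and let $T_n:=\eta_1+\dots+\eta_n$. Assume $\mathbb E\eta_1=0$ and $\mathbb E|\eta_1|^k<\infty$ for all $k=1,2,\dots$. Let $R$ be the hazard function of $G$, i.e. $\overline G(x)=e^{-R(x)}$, and suppose that for every $\varepsilon>0$ there exists $x_0$ such that $$R(x)/x\le(1+\varepsilon)R(z)/z\quad\text{for all }x\ge z\ge x_0.$$ Then for every $0<\varepsilon<1$ there exists $c=c(\varepsilon)<\infty$ such that $$\Pr\{T_n>x\}\le(n+1)\overline G(y)$$ for all $x>0$, $y\le(1-\varepsilon)x$ and $n$ such that $nR(y)/x^2\le1/c$.
   Context: $\overline G(x):=\Pr\{\eta_1>x\}$. *)

theory Defs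
  imports "HOL-Probability.Probability"
begin

definition tail_fun :: "'a measure \<Rightarrow> ('a \<Rightarrow> real) \<Rightarrow> real \<Rightarrow> real" where
  "tail_fun M X x = measure M {\<omega> \<in> space M. X \<omega> > x}"

end

theory Submission
  imports Defs
begin

lemma exp_quad: fixes u :: real shows "exp u \<le> 1 + u + u\<^sup>2 / 2 * exp (max u 0)"
proof (cases "u = 0")
  case True then show ?thesis by simp
next
  case False
  have D: "\<forall>m t. DERIV ((\<lambda>n. exp) m) t :> (\<lambda>n. exp) (Suc m) t" by (auto intro: DERIV_exp)
  show ?thesis
  proof (cases "u > 0")
    case True
    have "\<exists>t. 0 < t \<and> t < u \<and> exp u = (\<Sum>m<2. exp 0 / fact m * u ^ m) + exp t / fact 2 * u ^ 2"
      by (rule Maclaurin[OF True, of 2 "\<lambda>n. exp" exp]) (use D in auto)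
    then obtain t where t: "0 < t" "t < u" "exp u = 1 + u + exp t / 2 * u ^ 2"
      by (auto simp: numeral_2_eq_2)
    have "exp t \<le> exp u" using t(1,2) by simp
    then have "exp t / 2 * u^2 \<le> exp u / 2 * u^2" by (intro mult_right_mono) auto
    then show ?thesis using t True by (simp add: max_def)
  next
    case False
    then have u: "u < 0" using \<open>u \<noteq> 0\<close> by simp
    have "\<exists>t. u < t \<and> t < 0 \<and> exp u = (\<Sum>m<2. exp 0 / fact m * u ^ m) + exp t / fact 2 * u ^ 2"
      by (rule Maclaurin_minus[OF u, of 2 "\<lambda>n. exp" exp]) (use D in auto)
    then obtain t where t: "u < t" "t < 0" "exp u = 1 + u + exp t / 2 * u ^ 2"
      by (auto simp: numeral_2_eq_2)
    have "exp t \<le> 1" using t by simp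
    then have "exp t / 2 * u^2 \<le> 1 / 2 * u^2" by (intro mult_right_mono) auto
    then show ?thesis using t u by (simp add: max_def)
  qed
qed

lemma sum_inv_sq0: "(\<Sum>j<Suc N. 1 / (real j + 1)\<^sup>2) \<le> 2 - 1 / (real N + 1)"
proof (induction N)
  case 0 then show ?case by simp
next
  case (Suc N)
  have e: "1 / (real N + 1) - 1 / (real N + 2) = 1 / ((real N + 1) * (real N + 2))"
    by (simp add: field_simps)
  have "1 / (real N + 2)\<^sup>2 \<le> 1 / ((real N + 1) * (real N + 2))"
    by (intro divide_left_mono) (auto simp: power2_eq_square intro!: mult_pos_pos)
  then show ?case using Suc e by (simp add: add.commute)
qed

lemma sum_inv_sq: "(\<Sum>j<N. 1 / (real j + 1)\<^sup>2) \<le> 2"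
proof (cases N)
  case 0 then show ?thesis by simp
next
  case (Suc M) then show ?thesis using sum_inv_sq0[of M]
    by (smt (verit) divide_nonneg_nonneg of_nat_0_le_iff)
qed


lemma poly_ineq:
  fixes e :: real assumes "0 < e" "e < 1"
  shows "(1 + e/2) * (1 - e) * (1 + e/16)^3 \<le> 1 - e/4"
proof -
  have a: "(1 + e/16)^3 \<le> 1 + e/4"
  proof -
    have "(1 + e/16)^3 = 1 + 3*(e/16) + 3*(e/16)^2 + (e/16)^3" by (simp add: power3_eq_cube power2_eq_square field_simps)
    moreover have "(e/16)^2 \<le> (e/16) / 16" using assms by (simp add: power2_eq_square)
    moreover have "(e/16)^3 \<le> (e/16) / 16" using assms by (simp add: power3_eq_cube) (smt (verit) mult_le_one mult_nonneg_nonneg)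
    ultimately show ?thesis using assms by linarith
  qed
  have b: "(1 + e/2) * (1 - e) \<le> 1 - e/2" using assms by (simp add: algebra_simps)
  have c: "0 \<le> (1 + e/2) * (1 - e)" using assms by simp
  have "(1 + e/2) * (1 - e) * (1 + e/16)^3 \<le> (1 - e/2) * (1 + e/4)"
    using a b c assms by (intro mult_mono) auto
  also have "\<dots> \<le> 1 - e/4" using assms by (simp add: algebra_simps)
  finally show ?thesis .
qed

locale p3 = prob_space M for M :: "'a measure" +
  fixes \<eta> :: "nat \<Rightarrow> 'a \<Rightarrow> real" and R :: "real \<Rightarrow> real"
  assumes meas[measurable]: "\<And>i. \<eta> i \<in> borel_measurable M"
    and indep: "indep_vars (\<lambda>_. borel) \<eta> UNIV"
    and ident: "\<And>i. distr M borel (\<eta> i) = distr M borel (\<eta> 0)"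
    and mean0: "integrable M (\<eta> 0)" "integral\<^sup>L M (\<eta> 0) = 0"
    and moments: "\<And>k::nat. k \<ge> 1 \<Longrightarrow> integrable M (\<lambda>\<omega>. \<bar>\<eta> 0 \<omega>\<bar> ^ k)"
    and hazard: "\<And>x. tail_fun M (\<eta> 0) x = exp (- R x)"
begin

definition "Gb y = tail_fun M (\<eta> 0) y"
definition "mom k = expectation (\<lambda>\<omega>. \<bar>\<eta> 0 \<omega>\<bar> ^ k)"

lemma Gb_def2: "Gb y = prob {\<omega>\<in>space M. \<eta> 0 \<omega> > y}"
  by (simp add: Gb_def tail_fun_def)

lemma Gb_i: "prob {\<omega>\<in>space M. \<eta> i \<omega> > y} = Gb y"
proof -
  have e: "\<And>j. \<eta> j -` {y<..} \<inter> space M = {\<omega>\<in>space M. \<eta> j \<omega> > y}" by auto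
  have "measure (distr M borel (\<eta> i)) {y<..} = measure (distr M borel (\<eta> 0)) {y<..}" using ident[of i] by simp
  then show ?thesis unfolding Gb_def2
    by (simp add: measure_distr e)
qed

lemma exp_i:
  fixes f :: "real \<Rightarrow> real"
  assumes [measurable]: "f \<in> borel_measurable borel"
  shows "expectation (\<lambda>\<omega>. f (\<eta> i \<omega>)) = expectation (\<lambda>\<omega>. f (\<eta> 0 \<omega>))"
proof -
  have "expectation (\<lambda>\<omega>. f (\<eta> i \<omega>)) = integral\<^sup>L (distr M borel (\<eta> i)) f"
    by (rule integral_distr[symmetric]) auto
  also have "\<dots> = integral\<^sup>L (distr M borel (\<eta> 0)) f" using ident[of i] by simp
  also have "\<dots> = expectation (\<lambda>\<omega>. f (\<eta> 0 \<omega>))" by (rule integral_distr) auto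
  finally show ?thesis .
qed

lemma int_i:
  fixes f :: "real \<Rightarrow> real"
  assumes [measurable]: "f \<in> borel_measurable borel"
  shows "integrable M (\<lambda>\<omega>. f (\<eta> i \<omega>)) = integrable M (\<lambda>\<omega>. f (\<eta> 0 \<omega>))"
proof -
  have "integrable M (\<lambda>\<omega>. f (\<eta> i \<omega>)) = integrable (distr M borel (\<eta> i)) f"
    by (rule integrable_distr_eq[symmetric]) auto
  also have "\<dots> = integrable (distr M borel (\<eta> 0)) f" using ident[of i] by simp
  also have "\<dots> = integrable M (\<lambda>\<omega>. f (\<eta> 0 \<omega>))" by (rule integrable_distr_eq) auto
  finally show ?thesis .
qed

lemma Gb_R: "Gb y = exp (- R y)" by (simp add: Gb_def hazard)

lemma Gb_pos: "Gb y > 0" by (simp add: Gb_R)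

lemma Gb_le1: "Gb y \<le> 1" by (simp add: Gb_def2)

lemma R_nonneg: "R y \<ge> 0"
  using Gb_le1[of y] by (simp add: Gb_R)

lemma Gb_anti: "y \<le> z \<Longrightarrow> Gb z \<le> Gb y"
  unfolding Gb_def2 by (intro finite_measure_mono) auto

lemma R_mono: "y \<le> z \<Longrightarrow> R y \<le> R z"
  using Gb_anti[of y z] by (simp add: Gb_R)

lemma markov_abs:
  assumes "k \<ge> 1" "a > 0"
  shows "prob {\<omega>\<in>space M. \<bar>\<eta> 0 \<omega>\<bar> ^ k \<ge> a} \<le> mom k / a"
  unfolding mom_def
  by (rule integral_Markov_inequality_measure[OF moments[OF assms(1)], where A="space M"]) (use assms in auto)

lemma Gb_markov:
  assumes "k \<ge> 1" "t > 0"
  shows "Gb t \<le> mom k / t ^ k"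
proof -
  have "Gb t \<le> prob {\<omega>\<in>space M. \<bar>\<eta> 0 \<omega>\<bar> ^ k \<ge> t ^ k}"
    unfolding Gb_def2 using assms
  proof (intro finite_measure_mono subsetI)
    fix \<omega> assume "\<omega> \<in> {\<omega> \<in> space M. t < \<eta> 0 \<omega>}"
    then have "\<omega> \<in> space M" "t \<le> \<bar>\<eta> 0 \<omega>\<bar>" by auto
    then show "\<omega> \<in> {\<omega> \<in> space M. t ^ k \<le> \<bar>\<eta> 0 \<omega>\<bar> ^ k}"
      using assms by (simp add: power_mono)
  qed simp
  also have "\<dots> \<le> mom k / t ^ k" using assms by (intro markov_abs) auto
  finally show ?thesis .
qed

lemma Gb_cheb:
  assumes "y < 0"
  shows "1 - Gb y \<le> mom 2 / y\<^sup>2"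
proof -
  have "1 - Gb y = prob {\<omega>\<in>space M. \<eta> 0 \<omega> \<le> y}"
    unfolding Gb_def2
    by (subst prob_compl[symmetric]) (auto intro!: arg_cong[where f=prob])
  also have "\<dots> \<le> prob {\<omega>\<in>space M. \<bar>\<eta> 0 \<omega>\<bar> ^ 2 \<ge> y\<^sup>2}"
  proof (intro finite_measure_mono subsetI)
    fix \<omega> assume "\<omega> \<in> {\<omega> \<in> space M. \<eta> 0 \<omega> \<le> y}"
    then have "\<omega> \<in> space M" "\<bar>y\<bar> \<le> \<bar>\<eta> 0 \<omega>\<bar>" using assms by auto
    then show "\<omega> \<in> {\<omega> \<in> space M. y\<^sup>2 \<le> \<bar>\<eta> 0 \<omega>\<bar> ^ 2}"
      by (simp add: abs_le_square_iff)
  qed simp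
  also have "\<dots> \<le> mom 2 / y\<^sup>2" using assms by (intro markov_abs) auto
  finally show ?thesis .
qed


lemma int_sq: "integrable M (\<lambda>\<omega>. (\<eta> 0 \<omega>)\<^sup>2)"
  using moments[of 2] by simp

lemma mom2: "mom 2 = expectation (\<lambda>\<omega>. (\<eta> 0 \<omega>)\<^sup>2)"
  by (simp add: mom_def)

lemma int_zeta: "integrable M (\<lambda>\<omega>. min (\<eta> 0 \<omega>) y)"
  using mean0(1) by auto

lemma int_exp_zeta: assumes "h \<ge> 0" shows "integrable M (\<lambda>\<omega>. exp (h * min (\<eta> 0 \<omega>) y))"
proof (rule integrable_const_bound[where B="exp (h*y)"])
  show "AE x in M. norm (exp (h * min (\<eta> 0 x) y)) \<le> exp (h * y)"
    using assms by (auto intro!: mult_left_mono)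
qed simp

lemma int_sq_zeta: assumes "h \<ge> 0"
  shows "integrable M (\<lambda>\<omega>. (min (\<eta> 0 \<omega>) y)\<^sup>2 * exp (h * max (min (\<eta> 0 \<omega>) y) 0))"
proof (rule Bochner_Integration.integrable_bound[where f="\<lambda>\<omega>. ((\<eta> 0 \<omega>)\<^sup>2 + y\<^sup>2) * exp (h * \<bar>y\<bar>)"])
  show "integrable M (\<lambda>\<omega>. ((\<eta> 0 \<omega>)\<^sup>2 + y\<^sup>2) * exp (h * \<bar>y\<bar>))"
    using int_sq by auto
  show "AE x in M. norm ((min (\<eta> 0 x) y)\<^sup>2 * exp (h * max (min (\<eta> 0 x) y) 0))
     \<le> norm (((\<eta> 0 x)\<^sup>2 + y\<^sup>2) * exp (h * \<bar>y\<bar>))"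
  proof (intro AE_I2)
    fix x
    have a: "(min (\<eta> 0 x) y)\<^sup>2 \<le> (\<eta> 0 x)\<^sup>2 + y\<^sup>2" by (simp add: min_def)
    have b: "exp (h * max (min (\<eta> 0 x) y) 0) \<le> exp (h * \<bar>y\<bar>)"
      using assms by (auto intro!: mult_left_mono)
    show "norm ((min (\<eta> 0 x) y)\<^sup>2 * exp (h * max (min (\<eta> 0 x) y) 0))
     \<le> norm (((\<eta> 0 x)\<^sup>2 + y\<^sup>2) * exp (h * \<bar>y\<bar>))"
      using mult_mono[OF a b] by simp
  qed
qed simp

lemma exp_zeta_bound:
  assumes h: "h \<ge> 0"
  shows "expectation (\<lambda>\<omega>. exp (h * min (\<eta> 0 \<omega>) y))
     \<le> 1 + h\<^sup>2 / 2 * expectation (\<lambda>\<omega>. (min (\<eta> 0 \<omega>) y)\<^sup>2 * exp (h * max (min (\<eta> 0 \<omega>) y) 0))"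
proof -
  let ?z = "\<lambda>\<omega>. min (\<eta> 0 \<omega>) y"
  let ?q = "\<lambda>\<omega>. (min (\<eta> 0 \<omega>) y)\<^sup>2 * exp (h * max (min (\<eta> 0 \<omega>) y) 0)"
  have pt: "exp (h * ?z \<omega>) \<le> 1 + h * ?z \<omega> + h\<^sup>2 / 2 * ?q \<omega>" for \<omega>
  proof -
    have "max (h * ?z \<omega>) 0 = h * max (?z \<omega>) 0" using h by (simp add: max_mult_distrib_left)
    then show ?thesis using exp_quad[of "h * ?z \<omega>"] by (simp add: power_mult_distrib)
  qed
  have "expectation (\<lambda>\<omega>. exp (h * ?z \<omega>)) \<le> expectation (\<lambda>\<omega>. 1 + h * ?z \<omega> + h\<^sup>2 / 2 * ?q \<omega>)"
    using int_exp_zeta[OF h] int_zeta int_sq_zeta[OF h] pt by (intro integral_mono) auto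
  also have "\<dots> = 1 + h * expectation ?z + h\<^sup>2 / 2 * expectation ?q"
    using int_zeta int_sq_zeta[OF h] by (simp add: prob_space)
  also have "expectation ?z \<le> expectation (\<eta> 0)"
    using int_zeta mean0(1) by (intro integral_mono) auto
  then have "h * expectation ?z \<le> 0" using mean0(2) h by (simp add: mult_nonneg_nonpos)
  finally show ?thesis by simp
qed

lemma chernoff:
  assumes h: "h > 0"
  shows "prob {\<omega>\<in>space M. (\<Sum>i<n. min (\<eta> i \<omega>) y) > x}
     \<le> exp (- h * x) * (expectation (\<lambda>\<omega>. exp (h * min (\<eta> 0 \<omega>) y))) ^ n"
proof -
  define X where "X i \<omega> = exp (h * min (\<eta> i \<omega>) y)" for i \<omega>
  have Xm[measurable]: "X i \<in> borel_measurable M" for i unfolding X_def by measurable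
  have indX: "indep_vars (\<lambda>_. borel) X {..<n}"
    unfolding X_def
    by (rule indep_vars_compose2[OF indep_vars_subset[OF indep]]) auto
  have intX: "integrable M (X i)" for i
  proof -
    have "integrable M (\<lambda>\<omega>. (\<lambda>t. exp (h * min t y)) (\<eta> i \<omega>))"
      by (subst int_i) (use int_exp_zeta[of h y] h in auto)
    then show ?thesis by (simp add: X_def[abs_def])
  qed
  have EX: "expectation (X i) = expectation (X 0)" for i
  proof -
    have "expectation (\<lambda>\<omega>. (\<lambda>t. exp (h * min t y)) (\<eta> i \<omega>)) = expectation (\<lambda>\<omega>. (\<lambda>t. exp (h * min t y)) (\<eta> 0 \<omega>))"
      by (rule exp_i) auto
    then show ?thesis by (simp add: X_def[abs_def])
  qed
  have "{\<omega>\<in>space M. (\<Sum>i<n. min (\<eta> i \<omega>) y) > x} \<subseteq> {\<omega>\<in>space M. (\<Prod>i<n. X i \<omega>) \<ge> exp (h * x)}"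
  proof safe
    fix \<omega> assume "\<omega> \<in> space M" "x < (\<Sum>i<n. min (\<eta> i \<omega>) y)"
    then have "exp (h * x) \<le> exp (h * (\<Sum>i<n. min (\<eta> i \<omega>) y))" using h by simp
    also have "\<dots> = (\<Prod>i<n. X i \<omega>)" by (simp add: X_def sum_distrib_left exp_sum)
    finally show "exp (h * x) \<le> (\<Prod>i<n. X i \<omega>)" .
  qed
  then have "prob {\<omega>\<in>space M. (\<Sum>i<n. min (\<eta> i \<omega>) y) > x} \<le> prob {\<omega>\<in>space M. (\<Prod>i<n. X i \<omega>) \<ge> exp (h * x)}"
    by (intro finite_measure_mono) auto
  also have "\<dots> \<le> expectation (\<lambda>\<omega>. \<Prod>i<n. X i \<omega>) / exp (h * x)"
  proof (rule integral_Markov_inequality_measure[where A="space M"])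
    show "integrable M (\<lambda>\<omega>. \<Prod>i<n. X i \<omega>)"
      by (rule indep_vars_integrable[OF _ indX]) (auto intro: intX)
  qed (auto intro!: prod_nonneg simp: X_def)
  also have "expectation (\<lambda>\<omega>. \<Prod>i<n. X i \<omega>) = (\<Prod>i<n. expectation (X i))"
    by (rule indep_vars_lebesgue_integral[OF _ indX]) (auto intro: intX)
  also have "\<dots> = (\<Prod>i<n. expectation (X 0))" by (intro prod.cong refl EX)
  also have "\<dots> = (expectation (X 0)) ^ n" by simp
  finally show ?thesis by (simp add: X_def[abs_def] exp_minus divide_inverse mult.commute)
qed

lemma K_bound:
  assumes x1: "x1 \<ge> 1" and e1: "e1 \<ge> 0" and th: "\<theta> \<ge> 0"
    and reg: "\<And>x z. x \<ge> z \<Longrightarrow> z \<ge> x1 \<Longrightarrow> R x / x \<le> (1 + e1) * R z / z"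
    and h: "h \<ge> 0" "h * x1 \<le> B"
    and hy: "y > x1 \<Longrightarrow> h \<le> \<theta> * R y / y"
    and ylow: "y < 0 \<Longrightarrow> y\<^sup>2 \<le> 2 * mom 2"
  shows "expectation (\<lambda>\<omega>. (min (\<eta> 0 \<omega>) y)\<^sup>2 * exp (h * max (min (\<eta> 0 \<omega>) y) 0))
    \<le> exp B * (3 * mom 2) + (\<Sum>j<nat \<lceil>y - x1\<rceil>. (x1 + real j + 1)\<^sup>2 * exp (\<theta> * (1 + e1) * R (x1 + real j + 1)) * Gb (x1 + real j))"
proof -
  define N where "N = nat \<lceil>y - x1\<rceil>"
  define b where "b j = (x1 + real j + 1)\<^sup>2 * exp (\<theta> * (1 + e1) * R (x1 + real j + 1))" for j
  define A where "A j = {\<omega>\<in>space M. x1 + real j < \<eta> 0 \<omega>}" for j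
  have Am[measurable]: "A j \<in> sets M" for j unfolding A_def by measurable
  have b0: "b j \<ge> 0" for j unfolding b_def by simp
  let ?q = "\<lambda>\<omega>. (min (\<eta> 0 \<omega>) y)\<^sup>2 * exp (h * max (min (\<eta> 0 \<omega>) y) 0)"
  let ?r = "\<lambda>\<omega>. exp B * ((\<eta> 0 \<omega>)\<^sup>2 + 2 * mom 2) + (\<Sum>j<N. b j * indicator (A j) \<omega>)"
  have pt: "?q \<omega> \<le> ?r \<omega>" if \<omega>: "\<omega> \<in> space M" for \<omega>
  proof -
    define z where "z = min (\<eta> 0 \<omega>) y"
    have S0: "0 \<le> (\<Sum>j<N. b j * indicator (A j) \<omega>)" using b0 by (intro sum_nonneg) auto
    have m2: "0 \<le> mom 2" unfolding mom_def by simp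
    show ?thesis
    proof (cases "max z 0 \<le> x1")
      case True
      have a: "z\<^sup>2 \<le> (\<eta> 0 \<omega>)\<^sup>2 + 2 * mom 2"
      proof (cases "\<eta> 0 \<omega> \<le> y")
        case True then show ?thesis using m2 by (simp add: z_def)
      next
        case False
        then have zy: "z = y" by (simp add: z_def)
        show ?thesis
        proof (cases "y < 0")
          case True
          have "0 \<le> (\<eta> 0 \<omega>)\<^sup>2" by simp
          then show ?thesis unfolding zy using ylow[OF True] by linarith
        next
          case False
          then have "y\<^sup>2 \<le> (\<eta> 0 \<omega>)\<^sup>2" using \<open>\<not> \<eta> 0 \<omega> \<le> y\<close>
            by (intro power_mono) auto
          then show ?thesis using zy m2 by simp
        qed
      qed
      have "h * max z 0 \<le> h * x1" using True h by (intro mult_left_mono) auto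
      then have c: "exp (h * max z 0) \<le> exp B" using h by simp
      have "z\<^sup>2 * exp (h * max z 0) \<le> ((\<eta> 0 \<omega>)\<^sup>2 + 2 * mom 2) * exp B"
        by (rule mult_mono[OF a c]) (use m2 in \<open>auto intro!: add_nonneg_nonneg\<close>)
      then show ?thesis using S0 by (simp add: z_def mult.commute)
    next
      case False
      then have zx: "z > x1" using x1 by (simp add: max_def split: if_splits)
      then have yx: "y > x1" and ez: "\<eta> 0 \<omega> \<ge> z" and zy: "z \<le> y" by (auto simp: z_def)
      define k where "k = \<lceil>z - x1\<rceil>"
      have k1: "k \<ge> 1" using zx by (simp add: k_def)
      define j where "j = nat k - 1"
      have rj: "real j = real_of_int k - 1" using k1 by (simp add: j_def of_nat_diff)
      have tj: "x1 + real j < z" using rj by (simp add: k_def) linarith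
      have tj1: "z \<le> x1 + real j + 1" using rj by (simp add: k_def) linarith
      have "k \<le> \<lceil>y - x1\<rceil>" unfolding k_def using zy by (intro ceiling_mono) simp
      then have jN: "j < N" using k1 by (simp add: N_def j_def)
      have hz: "h * z \<le> \<theta> * (1 + e1) * R (x1 + real j + 1)"
      proof -
        have "h * z \<le> \<theta> * R y / y * z" using hy[OF yx] zx x1 by (intro mult_right_mono) auto
        also have "\<dots> = \<theta> * (R y / y * z)" by simp
        also have "\<dots> \<le> \<theta> * ((1 + e1) * R z / z * z)"
          using reg[OF zy] zx x1 th by (intro mult_left_mono mult_right_mono) auto
        also have "\<dots> = \<theta> * (1 + e1) * R z" using zx x1 by simp
        also have "\<dots> \<le> \<theta> * (1 + e1) * R (x1 + real j + 1)"
          using R_mono[OF tj1] th e1 by (intro mult_left_mono) auto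
        finally show ?thesis .
      qed
      have "z\<^sup>2 \<le> (x1 + real j + 1)\<^sup>2" using tj1 zx x1 by (intro power_mono) auto
      moreover have "exp (h * max z 0) \<le> exp (\<theta> * (1 + e1) * R (x1 + real j + 1))"
        using hz zx x1 by (simp add: max_def)
      ultimately have "z\<^sup>2 * exp (h * max z 0) \<le> b j" unfolding b_def by (intro mult_mono) auto
      also have "\<dots> = b j * indicator (A j) \<omega>" using tj ez \<omega> by (simp add: A_def)
      also have "\<dots> \<le> (\<Sum>j<N. b j * indicator (A j) \<omega>)"
        using jN b0 by (intro member_le_sum) auto
      finally have f: "z\<^sup>2 * exp (h * max z 0) \<le> (\<Sum>j<N. b j * indicator (A j) \<omega>)" .
      have "0 \<le> exp B * ((\<eta> 0 \<omega>)\<^sup>2 + 2 * mom 2)" using m2 by simp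
      then show ?thesis using f unfolding z_def by linarith
    qed
  qed
  have i1: "integrable M (\<lambda>\<omega>. exp B * ((\<eta> 0 \<omega>)\<^sup>2 + 2 * mom 2))"
    using int_sq by simp
  have i2: "integrable M (\<lambda>\<omega>. b j * indicator (A j) \<omega>)" for j
    by (intro integrable_mult_right integrable_real_indicator) (auto simp: less_top[symmetric])
  have i3: "integrable M (\<lambda>\<omega>. \<Sum>j<N. b j * indicator (A j) \<omega>)"
    by (rule Bochner_Integration.integrable_sum) (use i2 in auto)
  have intr: "integrable M ?r" using Bochner_Integration.integrable_add[OF i1 i3] by simp
  have "expectation ?q \<le> expectation ?r"
    using int_sq_zeta[OF h(1)] intr pt by (intro integral_mono) auto
  also have "expectation ?r = exp B * (mom 2 + 2 * mom 2) + (\<Sum>j<N. b j * prob (A j))"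
  proof -
    have "expectation ?r = expectation (\<lambda>\<omega>. exp B * ((\<eta> 0 \<omega>)\<^sup>2 + 2 * mom 2)) + expectation (\<lambda>\<omega>. \<Sum>j<N. b j * indicator (A j) \<omega>)"
      by (rule Bochner_Integration.integral_add[OF i1 i3])
    also have "expectation (\<lambda>\<omega>. exp B * ((\<eta> 0 \<omega>)\<^sup>2 + 2 * mom 2)) = exp B * (mom 2 + 2 * mom 2)"
      using int_sq by (simp add: mom2 prob_space)
    also have "expectation (\<lambda>\<omega>. \<Sum>j<N. b j * indicator (A j) \<omega>) = (\<Sum>j<N. expectation (\<lambda>\<omega>. b j * indicator (A j) \<omega>))"
      by (rule Bochner_Integration.integral_sum) (use i2 in auto)
    also have "\<dots> = (\<Sum>j<N. b j * prob (A j))"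
    proof (intro sum.cong refl)
      fix j
      have "A j \<inter> space M = A j" using sets.sets_into_space[OF Am[of j]] by blast
      then show "expectation (\<lambda>\<omega>. b j * indicator (A j) \<omega>) = b j * prob (A j)"
        by simp
    qed
    finally show ?thesis .
  qed
  also have "(\<Sum>j<N. b j * prob (A j)) = (\<Sum>j<N. b j * Gb (x1 + real j))"
    by (simp add: A_def Gb_def2)
  finally show ?thesis by (simp add: N_def b_def)
qed

lemma term_bound:
  assumes e: "0 < e" "e < 1" and x1: "x1 \<ge> 1" "x1 \<ge> 16 / e"
    and reg: "\<And>x z. x \<ge> z \<Longrightarrow> z \<ge> x1 \<Longrightarrow> R x / x \<le> (1 + e/16) * R z / z"
    and k: "k \<ge> 1" "e / 4 * real k \<ge> 4"
  shows "(x1 + real j + 1)\<^sup>2 * exp ((1 + e/2) * (1 - e) * (1 + e/16) * R (x1 + real j + 1)) * Gb (x1 + real j)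
     \<le> 4 * exp (e / 4 * ln (mom k + 1)) / (real j + 1)\<^sup>2"
proof -
  define t where "t = x1 + real j"
  define \<theta> where "\<theta> = (1 + e/2) * (1 - e)"
  define mk where "mk = mom k + 1"
  have t1: "t \<ge> 1" "t \<ge> x1" "t \<ge> real j + 1" using x1 by (auto simp: t_def)
  have th0: "\<theta> \<ge> 0" using e by (simp add: \<theta>_def)
  have mk0: "mk > 0" unfolding mk_def mom_def by (simp add: add_nonneg_pos)
  have Rt: "R t \<ge> 0" "R (t+1) \<ge> 0" by (auto simp: R_nonneg)
  have "R (t+1) / (t+1) \<le> (1 + e/16) * R t / t" using reg[of t "t+1"] t1 by simp
  then have "R (t+1) \<le> (1 + e/16) * R t * ((t+1) / t)" using t1 by (simp add: field_simps)
  also have "(t+1)/t \<le> 1 + e/16"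
  proof -
    have "1 / t \<le> 1 / x1" using t1 x1 by (intro divide_left_mono) auto
    also have "\<dots> \<le> e / 16" using x1 e by (simp add: field_simps)
    finally show ?thesis using t1 by (simp add: add_divide_distrib)
  qed
  then have "(1 + e/16) * R t * ((t+1) / t) \<le> (1 + e/16) * R t * (1 + e/16)"
    using e Rt by (intro mult_left_mono) auto
  finally have R1: "R (t+1) \<le> (1 + e/16)^2 * R t" by (simp add: power2_eq_square mult_ac)
  have "\<theta> * (1 + e/16) * R (t+1) \<le> \<theta> * (1 + e/16) * ((1 + e/16)^2 * R t)"
    using R1 th0 e by (intro mult_left_mono) auto
  also have "\<dots> = (\<theta> * (1 + e/16)^3) * R t" by (simp add: power2_eq_square power3_eq_cube)
  also have "\<dots> \<le> (1 - e/4) * R t"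
    using poly_ineq[OF e] Rt by (intro mult_right_mono) (auto simp: \<theta>_def)
  finally have ex1: "\<theta> * (1 + e/16) * R (t+1) - R t \<le> - (e/4) * R t" by (simp add: algebra_simps)
  have "Gb t \<le> mom k / t ^ k" using Gb_markov[OF k(1)] t1 by simp
  also have "\<dots> \<le> mk / t ^ k" unfolding mk_def using t1 by (intro divide_right_mono) auto
  finally have "Gb t \<le> mk / t ^ k" .
  moreover have "mk / t ^ k > 0" using mk0 t1 by simp
  ultimately have "ln (Gb t) \<le> ln (mk / t ^ k)" using Gb_pos[of t] by (subst ln_le_cancel_iff) auto
  then have lnR: "- R t \<le> ln mk - real k * ln t" using mk0 t1 by (simp add: Gb_R ln_div ln_realpow)
  have lnt: "ln t \<ge> 0" using t1 by simp
  have "- (e/4) * R t \<le> e/4 * ln mk - (e/4 * real k) * ln t"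
    using mult_left_mono[OF lnR, of "e/4"] e by (simp add: algebra_simps)
  also have "\<dots> \<le> e/4 * ln mk - 4 * ln t" using k(2) lnt by (simp add: mult_right_mono)
  finally have ex2: "\<theta> * (1 + e/16) * R (t+1) - R t \<le> e/4 * ln mk - 4 * ln t" using ex1 by linarith
  have "exp (\<theta> * (1 + e/16) * R (t+1)) * Gb t = exp (\<theta> * (1 + e/16) * R (t+1) - R t)"
    unfolding Gb_R by (simp add: exp_add[symmetric])
  also have "\<dots> \<le> exp (e/4 * ln mk - 4 * ln t)" using ex2 by simp
  also have "\<dots> = exp (e/4 * ln mk) / t^4"
  proof -
    have "ln (t^4) = 4 * ln t" using t1 by (simp add: ln_realpow)
    then have "exp (4 * ln t) = t^4" using t1 by (metis exp_ln zero_less_power less_le_trans zero_less_one)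
    then show ?thesis by (simp add: exp_diff)
  qed
  finally have E: "exp (\<theta> * (1 + e/16) * R (t+1)) * Gb t \<le> exp (e/4 * ln mk) / t^4" .
  have "(t+1)\<^sup>2 \<le> (2*t)\<^sup>2" using t1 by (intro power_mono) auto
  then have sq: "(t+1)\<^sup>2 \<le> 4 * t\<^sup>2" by (simp add: power_mult_distrib)
  have "(t+1)\<^sup>2 * (exp (\<theta> * (1 + e/16) * R (t+1)) * Gb t) \<le> (4 * t\<^sup>2) * (exp (e/4 * ln mk) / t^4)"
    using sq E by (intro mult_mono) (auto simp: Gb_R)
  also have "\<dots> = 4 * exp (e/4 * ln mk) / t\<^sup>2" using t1 by (simp add: power2_eq_square power4_eq_xxxx)
  also have "\<dots> \<le> 4 * exp (e/4 * ln mk) / (real j + 1)\<^sup>2"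
    using t1 by (intro divide_left_mono power_mono) auto
  finally show ?thesis by (simp add: t_def \<theta>_def mk_def mult_ac)
qed

lemma main:
  assumes regular: "\<And>\<epsilon>::real. \<epsilon> > 0 \<Longrightarrow> \<exists>x0. \<forall>x z. x \<ge> z \<and> z \<ge> x0 \<longrightarrow>
                    R x / x \<le> (1 + \<epsilon>) * R z / z"
    and e: "0 < \<epsilon>" "\<epsilon> < 1"
  shows "\<exists>c::real. c > 0 \<and>
           (\<forall>x y::real. \<forall>n::nat. x > 0 \<and> y \<le> (1 - \<epsilon>) * x \<and> real n * R y / x\<^sup>2 \<le> 1 / c \<longrightarrow>
              prob {\<omega> \<in> space M. (\<Sum>i<n. \<eta> i \<omega>) > x} \<le> (real n + 1) * Gb y)"
proof -
  obtain x0 where x0: "\<forall>x z. x \<ge> z \<and> z \<ge> x0 \<longrightarrow> R x / x \<le> (1 + \<epsilon>/16) * R z / z"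
    using regular[of "\<epsilon>/16"] e by auto
  define x1 where "x1 = max (max x0 (16/\<epsilon>)) 1"
  have x1: "x1 \<ge> 1" "x1 \<ge> 16/\<epsilon>" "x1 \<ge> x0" by (auto simp: x1_def)
  have reg: "\<And>x z. x \<ge> z \<Longrightarrow> z \<ge> x1 \<Longrightarrow> R x / x \<le> (1 + \<epsilon>/16) * R z / z"
    using x0 x1 by auto
  define k where "k = nat \<lceil>16/\<epsilon>\<rceil>"
  have k16: "real k \<ge> 16/\<epsilon>" unfolding k_def by linarith
  have "16/\<epsilon> > 1" using e by (simp add: field_simps)
  then have k1: "k \<ge> 1" using k16 by linarith
  have k4: "\<epsilon> / 4 * real k \<ge> 4"
  proof -
    have "\<epsilon> / 4 * real k \<ge> \<epsilon> / 4 * (16/\<epsilon>)" using k16 e by (intro mult_left_mono) auto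
    then show ?thesis using e by simp
  qed
  define A0 where "A0 = 4 * exp (\<epsilon> / 4 * ln (mom k + 1))"
  define \<theta> where "\<theta> = (1 + \<epsilon>/2) * (1 - \<epsilon>)"
  define B where "B = 2 * R x1 * x1"
  define K where "K = exp B * (3 * mom 2) + 2 * A0"
  define \<delta> where "\<delta> = \<epsilon> / 2"
  define c where "c = max 4 ((1 + \<delta>)\<^sup>2 * K / (2 * \<delta>) + 1)"
  have m2: "mom 2 \<ge> 0" unfolding mom_def by simp
  have A0: "A0 \<ge> 0" by (simp add: A0_def)
  have K0: "K \<ge> 0" using m2 A0 by (simp add: K_def)
  have d0: "\<delta> > 0" using e by (simp add: \<delta>_def)
  have c4: "c \<ge> 4" by (simp add: c_def)
  have cK: "(1 + \<delta>)\<^sup>2 * K / (2 * c) \<le> \<delta>"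
  proof -
    have "(1 + \<delta>)\<^sup>2 * K / (2 * \<delta>) \<le> c" by (simp add: c_def)
    then have "(1 + \<delta>)\<^sup>2 * K \<le> c * (2 * \<delta>)" using d0 by (simp add: field_simps)
    then show ?thesis using c4 by (simp add: field_simps)
  qed
  have th0: "\<theta> \<ge> 0" "\<theta> \<le> 1"
  proof -
    have "\<theta> = 1 - \<epsilon>/2 - \<epsilon>*\<epsilon>/2" unfolding \<theta>_def by (simp add: field_simps)
    moreover have "\<epsilon>*\<epsilon> \<ge> 0" by simp
    ultimately show "\<theta> \<le> 1" using e by linarith
    show "\<theta> \<ge> 0" using e by (simp add: \<theta>_def)
  qed
  show ?thesis
  proof (intro exI[of _ c] conjI allI impI)
    show "c > 0" using c4 by simp
    fix x y :: real and n :: nat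
    assume H: "x > 0 \<and> y \<le> (1 - \<epsilon>) * x \<and> real n * R y / x\<^sup>2 \<le> 1 / c"
    then have x0': "x > 0" and yx: "y \<le> (1 - \<epsilon>) * x" and nR: "real n * R y / x\<^sup>2 \<le> 1 / c" by auto
    let ?S = "{\<omega> \<in> space M. (\<Sum>i<n. \<eta> i \<omega>) > x}"
    show "prob ?S \<le> (real n + 1) * Gb y"
    proof (cases "n = 0 \<or> (real n + 1) * Gb y \<ge> 1")
      case True
      then show ?thesis
      proof
        assume "n = 0" then show ?thesis using x0' Gb_pos[of y] by simp
      next
        assume "(real n + 1) * Gb y \<ge> 1"
        then show ?thesis using prob_le_1[of ?S] by linarith
      qed
    next
      case False
      then have n1: "n \<ge> 1" and small: "(real n + 1) * Gb y < 1" by auto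
      have Gh: "Gb y < 1/2"
      proof -
        have "2 * Gb y \<le> (real n + 1) * Gb y" using n1 Gb_pos[of y] by (intro mult_right_mono) auto
        then show ?thesis using small by simp
      qed
      have Ry: "R y > 2/3"
      proof -
        have "exp (- R y) < exp (- ln 2)" using Gh by (simp add: Gb_R exp_minus)
        then have "R y > ln 2" by simp
        then show ?thesis using ln2_ge_two_thirds by linarith
      qed
      have x1': "x \<ge> 1"
      proof -
        have "real n * R y \<le> x\<^sup>2 / c" using nR x0' c4 by (simp add: field_simps)
        moreover have "real n * R y \<ge> 2/3" using n1 Ry
          by (metis mult_1 mult_mono' of_nat_1 of_nat_le_iff less_le zero_le_one less_trans zero_less_divide_iff zero_less_numeral)
        ultimately have a: "real n * R y \<le> x\<^sup>2 / c" "real n * R y \<ge> 2/3" by auto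
        have "c * (2/3) \<le> c * (real n * R y)" using a(2) c4 by (intro mult_left_mono) auto
        also have "\<dots> \<le> x\<^sup>2" using a(1) c4 by (simp add: field_simps)
        finally have "x\<^sup>2 \<ge> 2/3 * c" by simp
        then have "x\<^sup>2 \<ge> 1" using c4 by linarith
        then show ?thesis using x0' by (metis abs_of_pos one_le_power one_power2 power2_le_imp_le less_le zero_le_one)
      qed
      have ylow: "y < 0 \<Longrightarrow> y\<^sup>2 \<le> 2 * mom 2"
      proof -
        assume y: "y < 0"
        have "1/2 < mom 2 / y\<^sup>2" using Gb_cheb[OF y] Gh by linarith
        then show "y\<^sup>2 \<le> 2 * mom 2" using y by (simp add: field_simps)
      qed
      define h where "h = (1 + \<delta>) * R y / x"
      have Ry0: "R y \<ge> 0" by (rule R_nonneg)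
      have h0: "h > 0" using Ry x0' d0 by (simp add: h_def)
      have hy: "y > x1 \<Longrightarrow> h \<le> \<theta> * R y / y"
      proof -
        assume y: "y > x1"
        then have y0: "y > 0" using x1 by linarith
        have "1 / x \<le> (1 - \<epsilon>) / y" using yx y0 x0' by (simp add: field_simps)
        then have "(1 + \<delta>) * R y * (1 / x) \<le> (1 + \<delta>) * R y * ((1 - \<epsilon>) / y)"
          using d0 Ry0 by (intro mult_left_mono) auto
        then show "h \<le> \<theta> * R y / y" by (simp add: h_def \<theta>_def \<delta>_def mult_ac)
      qed
      have hB: "h * x1 \<le> B"
      proof (cases "y > x1")
        case True
        have "R y / y \<le> (1 + \<epsilon>/16) * R x1 / x1" using reg[of x1 y] True by simp
        then have "\<theta> * (R y / y) \<le> 1 * ((1 + \<epsilon>/16) * R x1 / x1)"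
          using th0 True x1 Ry0 R_nonneg[of x1] by (intro mult_mono) auto
        then have "h \<le> (1 + \<epsilon>/16) * R x1 / x1" using hy[OF True] by simp
        also have "\<dots> \<le> 2 * R x1 / x1" using e x1 R_nonneg[of x1] by (intro divide_right_mono mult_right_mono) auto
        finally have "h * x1 \<le> 2 * R x1" using x1 by (simp add: field_simps)
        also have "\<dots> \<le> 2 * R x1 * x1" using x1 R_nonneg[of x1] by (simp add: mult_le_cancel_left1)
        finally show ?thesis by (simp add: B_def)
      next
        case False
        have "h \<le> (1 + \<delta>) * R x1 / x" unfolding h_def using R_mono[of y x1] False d0 x0'
          by (intro divide_right_mono mult_left_mono) auto
        also have "\<dots> \<le> (1 + \<delta>) * R x1" using x1' d0 R_nonneg[of x1]
          by (simp add: divide_le_eq mult_le_cancel_left1 mult_left_mono) (smt (verit) mult_left_mono mult_nonneg_nonneg)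
        also have "\<dots> \<le> 2 * R x1" using e R_nonneg[of x1] by (intro mult_right_mono) (auto simp: \<delta>_def)
        finally have "h \<le> 2 * R x1" .
        then show ?thesis using x1 h0 unfolding B_def by (intro mult_right_mono) auto
      qed
      have Kb: "expectation (\<lambda>\<omega>. (min (\<eta> 0 \<omega>) y)\<^sup>2 * exp (h * max (min (\<eta> 0 \<omega>) y) 0)) \<le> K"
      proof -
        have "expectation (\<lambda>\<omega>. (min (\<eta> 0 \<omega>) y)\<^sup>2 * exp (h * max (min (\<eta> 0 \<omega>) y) 0))
          \<le> exp B * (3 * mom 2) + (\<Sum>j<nat \<lceil>y - x1\<rceil>. (x1 + real j + 1)\<^sup>2 * exp (\<theta> * (1 + \<epsilon>/16) * R (x1 + real j + 1)) * Gb (x1 + real j))"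
          by (rule K_bound[OF x1(1) _ th0(1) reg _ hB hy ylow]) (use e h0 in auto)
        also have "(\<Sum>j<nat \<lceil>y - x1\<rceil>. (x1 + real j + 1)\<^sup>2 * exp (\<theta> * (1 + \<epsilon>/16) * R (x1 + real j + 1)) * Gb (x1 + real j))
            \<le> (\<Sum>j<nat \<lceil>y - x1\<rceil>. A0 * (1 / (real j + 1)\<^sup>2))"
          unfolding \<theta>_def A0_def using term_bound[OF e x1(1) x1(2) reg k1 k4] by (intro sum_mono) simp
        also have "\<dots> = A0 * (\<Sum>j<nat \<lceil>y - x1\<rceil>. 1 / (real j + 1)\<^sup>2)" by (simp add: sum_distrib_left)
        also have "\<dots> \<le> A0 * 2" using A0 sum_inv_sq by (intro mult_left_mono) auto
        finally show ?thesis by (simp add: K_def)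
      qed
      have EZ: "expectation (\<lambda>\<omega>. exp (h * min (\<eta> 0 \<omega>) y)) \<le> exp (h\<^sup>2 * K / 2)"
      proof -
        have "expectation (\<lambda>\<omega>. exp (h * min (\<eta> 0 \<omega>) y)) \<le> 1 + h\<^sup>2 / 2 * K"
        proof -
          have "h\<^sup>2 / 2 * expectation (\<lambda>\<omega>. (min (\<eta> 0 \<omega>) y)\<^sup>2 * exp (h * max (min (\<eta> 0 \<omega>) y) 0)) \<le> h\<^sup>2 / 2 * K"
            by (rule mult_left_mono[OF Kb]) simp
          then show ?thesis using exp_zeta_bound[of h y] h0 by linarith
        qed
        also have "\<dots> \<le> exp (h\<^sup>2 / 2 * K)" by (rule exp_ge_add_one_self[THEN order.trans[rotated]]) (simp add: add.commute)
        finally show ?thesis by (simp add: mult_ac)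
      qed
      have EZ0: "expectation (\<lambda>\<omega>. exp (h * min (\<eta> 0 \<omega>) y)) \<ge> 0" by simp
      let ?Z = "{\<omega> \<in> space M. (\<Sum>i<n. min (\<eta> i \<omega>) y) > x}"
      have PZ: "prob ?Z \<le> Gb y"
      proof -
        have "prob ?Z \<le> exp (- h * x) * (expectation (\<lambda>\<omega>. exp (h * min (\<eta> 0 \<omega>) y))) ^ n"
          by (rule chernoff[OF h0])
        also have "\<dots> \<le> exp (- h * x) * (exp (h\<^sup>2 * K / 2)) ^ n"
          using EZ EZ0 by (intro mult_left_mono power_mono) auto
        also have "\<dots> = exp (- h * x + real n * (h\<^sup>2 * K / 2))"
          by (simp only: exp_of_nat_mult[symmetric] exp_add)
        also have "\<dots> \<le> exp (- R y)"
        proof -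
          have hx: "h * x = (1 + \<delta>) * R y" using x0' by (simp add: h_def)
          have "real n * (h\<^sup>2 * K / 2) = (1 + \<delta>)\<^sup>2 * K / 2 * R y * (real n * R y / x\<^sup>2)"
            using x0' by (simp add: h_def power2_eq_square field_simps)
          also have "\<dots> \<le> (1 + \<delta>)\<^sup>2 * K / 2 * R y * (1 / c)"
            using nR K0 Ry0 by (intro mult_left_mono) auto
          also have "\<dots> = ((1 + \<delta>)\<^sup>2 * K / (2 * c)) * R y" by simp
          also have "\<dots> \<le> \<delta> * R y" using cK Ry0 by (intro mult_right_mono) auto
          finally have "real n * (h\<^sup>2 * K / 2) \<le> \<delta> * R y" .
          then have "- h * x + real n * (h\<^sup>2 * K / 2) \<le> - R y" using hx by (simp add: algebra_simps)
          then show ?thesis by simp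
        qed
        finally show ?thesis by (simp add: Gb_R)
      qed
      have sub: "?S \<subseteq> ?Z \<union> (\<Union>i<n. {\<omega> \<in> space M. \<eta> i \<omega> > y})"
      proof
        fix \<omega> assume w: "\<omega> \<in> ?S"
        show "\<omega> \<in> ?Z \<union> (\<Union>i<n. {\<omega> \<in> space M. \<eta> i \<omega> > y})"
        proof (cases "\<exists>i<n. \<eta> i \<omega> > y")
          case True then show ?thesis using w by auto
        next
          case False
          then have "(\<Sum>i<n. min (\<eta> i \<omega>) y) = (\<Sum>i<n. \<eta> i \<omega>)" by (intro sum.cong) (auto simp: min_def)
          then show ?thesis using w by auto
        qed
      qed
      have "prob ?S \<le> prob (?Z \<union> (\<Union>i<n. {\<omega> \<in> space M. \<eta> i \<omega> > y}))"
        by (rule finite_measure_mono[OF sub]) auto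
      also have "\<dots> \<le> prob ?Z + prob (\<Union>i<n. {\<omega> \<in> space M. \<eta> i \<omega> > y})"
        by (rule measure_Un_le) auto
      also have "prob (\<Union>i<n. {\<omega> \<in> space M. \<eta> i \<omega> > y}) \<le> (\<Sum>i<n. prob {\<omega> \<in> space M. \<eta> i \<omega> > y})"
        by (rule finite_measure_subadditive_finite) auto
      also have "\<dots> = real n * Gb y" by (simp add: Gb_i)
      finally show ?thesis using PZ by (simp add: algebra_simps)
    qed
  qed
qed

end

theorem proposition3:
  fixes M :: "'a measure" and \<eta> :: "nat \<Rightarrow> 'a \<Rightarrow> real" and R :: "real \<Rightarrow> real"
  assumes "prob_space M"
    and meas: "\<And>i. \<eta> i \<in> borel_measurable M"
    and indep: "prob_space.indep_vars M (\<lambda>_. borel) \<eta> UNIV"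
    and ident: "\<And>i. distr M borel (\<eta> i) = distr M borel (\<eta> 0)"
    and mean0: "integrable M (\<eta> 0)" "integral\<^sup>L M (\<eta> 0) = 0"
    and moments: "\<And>k::nat. k \<ge> 1 \<Longrightarrow> integrable M (\<lambda>\<omega>. \<bar>\<eta> 0 \<omega>\<bar> ^ k)"
    and hazard: "\<And>x. tail_fun M (\<eta> 0) x = exp (- R x)"
    and regular: "\<And>\<epsilon>::real. \<epsilon> > 0 \<Longrightarrow> \<exists>x0. \<forall>x z. x \<ge> z \<and> z \<ge> x0 \<longrightarrow>
                    R x / x \<le> (1 + \<epsilon>) * R z / z"
  shows "\<forall>\<epsilon>::real. 0 < \<epsilon> \<and> \<epsilon> < 1 \<longrightarrow> (\<exists>c::real. c > 0 \<and>
           (\<forall>x y::real. \<forall>n::nat. x > 0 \<and> y \<le> (1 - \<epsilon>) * x \<and> real n * R y / x\<^sup>2 \<le> 1 / c \<longrightarrow>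
              measure M {\<omega> \<in> space M. (\<Sum>i<n. \<eta> i \<omega>) > x}
                \<le> (real n + 1) * tail_fun M (\<eta> 0) y))"
proof -
  interpret p3 M \<eta> R
    by (rule p3.intro[OF assms(1)], unfold_locales) (use assms in auto)
  show ?thesis
  proof (intro allI impI)
    fix \<epsilon> :: real assume "0 < \<epsilon> \<and> \<epsilon> < 1"
    then show "\<exists>c::real. c > 0 \<and>
           (\<forall>x y::real. \<forall>n::nat. x > 0 \<and> y \<le> (1 - \<epsilon>) * x \<and> real n * R y / x\<^sup>2 \<le> 1 / c \<longrightarrow>
              measure M {\<omega> \<in> space M. (\<Sum>i<n. \<eta> i \<omega>) > x}
                \<le> (real n + 1) * tail_fun M (\<eta> 0) y)"
      using main[OF regular] unfolding Gb_def by blast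
  qed
qed

end
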